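(* Let $\pi_1,\dots,\pi_m$ be permutations and $t_1,\dots,t_m$ reals such that $\sum_{i\in[m]}t_iP_{\pi_i}=0$, and let $k=\max\{|\pi_1|,\dots,|\pi_m|\}$. Suppose that $\pi_1,\dots,\pi_n$ are exactly those among $\pi_1,\dots,\pi_m$ that have order $k$. Let $h$ be an integer with $2\le h\le k$ such that each of the remaining permutations $\pi_{n+1},\dots,\pi_m$ has order at most $h-1$. Let $\omega=t_1\pi_1+\dots+t_n\pi_n$. Then $$\mathrm{Cov}(\omega)\,\mathbf{b}_h=(0,\dots,0)^T\quad\text{and}\quad \mathbf{b}_h^T\,\mathrm{Cov}(\omega)=(0,\dots,0).$$
   Context: A $k$-permutation is a bijection of $[k]=\{1,\dots,k\}$; $|\pi|$ denotes the order. The gradient polynomial of a $k$-permutation $\pi$ is $P_\pi(\alpha,\beta)=k!\sum_{m\in[k]}\left(\frac{k-m}{1-\alpha}-\frac{m-1}{\alpha}\right)\left(\frac{k-\pi(m)}{1-\beta}-\frac{\pi(m)-1}{\beta}\right)\frac{\alpha^{m-1}(1-\alpha)^{k-m}\beta^{\pi(m)-1}(1-\beta)^{k-\pi(m)}}{(m-1)!(k-m)!(\pi(m)-1)!(k-\pi(m))!}$. The permutation matrix $A_\pi\in\mathbb{R}^{k\times k}$ has $(A_\pi)_{i,j}=1$ if $\pi(i)=j$ and $0$ otherwise. For a formal real linear combination $\omega=\sum_i t_i\pi_i$ of $k$-permutations, its cover matrix is $\mathrm{Cov}(\omega)=\sum_i t_iA_{\pi_i}\in\mathbb{R}^{k\times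 k}$. For $a\in[k]$, $\mathbf{b}_a=\mathbf{b}^k_a\in\mathbb{R}^k$ is the column vector with $(\mathbf{b}_a)_\ell=(-1)^{\ell-1}\binom{a-1}{\ell-1}$ for $1\le\ell\le a$ and $0$ for $\ell>a$. *)

theory Defs
  imports "HOL-Analysis.Analysis"
begin

text \<open>A k-permutation is a bijection of [k] = {1..k}; we represent it by its order k
  together with a function f :: nat \<Rightarrow> nat that is a bijection of {1..k}.\<close>

definition is_kperm :: "nat \<Rightarrow> (nat \<Rightarrow> nat) \<Rightarrow> bool" where
  "is_kperm k f \<longleftrightarrow> bij_betw f {1..k} {1..k}"

definition grad_poly :: "nat \<Rightarrow> (nat \<Rightarrow> nat) \<Rightarrow> real \<Rightarrow> real \<Rightarrow> real" where
  "grad_poly k f a b = fact k * (\<Sum>m\<in>{1..k}.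
      ((real (k - m)) / (1 - a) - (real (m - 1)) / a) *
      ((real (k - f m)) / (1 - b) - (real (f m - 1)) / b) *
      (a ^ (m - 1) * (1 - a) ^ (k - m) * b ^ (f m - 1) * (1 - b) ^ (k - f m)) /
      (fact (m - 1) * fact (k - m) * fact (f m - 1) * fact (k - f m)))"

definition perm_mat :: "(nat \<Rightarrow> nat) \<Rightarrow> nat \<Rightarrow> nat \<Rightarrow> real" where
  "perm_mat f i j = (if f i = j then 1 else 0)"

text \<open>Cover matrix of omega = sum of t_i pi_i over i in I (all pi_i of the same order).\<close>

definition cover :: "nat set \<Rightarrow> (nat \<Rightarrow> real) \<Rightarrow> (nat \<Rightarrow> nat \<Rightarrow> nat) \<Rightarrow> nat \<Rightarrow> nat \<Rightarrow> real" where
  "cover I t p i j = (\<Sum>l\<in>I. t l * perm_mat (p l) i j)"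

definition bvec :: "nat \<Rightarrow> nat \<Rightarrow> real" where
  "bvec a l = (if 1 \<le> l \<and> l \<le> a then (-1) ^ (l - 1) * real ((a - 1) choose (l - 1)) else 0)"

end

theory Submission
  imports Defs "HOL-Computational_Algebra.Polynomial"
begin

definition Bp :: "nat \<Rightarrow> nat \<Rightarrow> real poly" where
  "Bp k j = smult (1 / (fact (j-1) * fact (k-j))) (monom 1 (j-1) * [:1,-1:]^(k-j))"

definition Dp :: "nat \<Rightarrow> nat \<Rightarrow> real poly" where
  "Dp k j = - pderiv (Bp k j)"

lemma coeff_lin: "coeff ([:1,-1:]^N :: real poly) i = (-1)^i * real (N choose i)"
proof (cases "i \<le> N")
  case True then show ?thesis using coeff_linear_poly_power[OF True, of 1 "-1::real"] by simp
next
  case False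
  have "degree ([:1,-1:]^N :: real poly) \<le> N"
    using degree_power_le[of "[:1,-1::real:]" N] by simp
  then show ?thesis using False by (simp add: coeff_eq_0)
qed

lemma coeff_Bp: "coeff (Bp k j) n = (if n < j - 1 then 0 else (-1)^(n-(j-1)) * real ((k-j) choose (n-(j-1)))) / (fact (j-1) * fact (k-j))"
  unfolding Bp_def by (simp add: coeff_monom_mult coeff_lin)

lemma coeff_Dp: "coeff (Dp k j) n = - real (Suc n) * coeff (Bp k j) (Suc n)"
  unfolding Dp_def by (simp add: coeff_pderiv algebra_simps)

lemma poly_pderiv_aux: "poly (pderiv (monom 1 a * [:1,-1:]^N)) x =
   real a * x^(a-1) * (1-x)^N - real N * x^a * (1-x)^(N-1)"
  by (simp add: pderiv_mult pderiv_power pderiv_monom poly_monom algebra_simps pderiv_pCons)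

lemma poly_Dp:
  assumes "x \<noteq> 0" "x \<noteq> 1" "1 \<le> j" "j \<le> k"
  shows "poly (Dp k j) x = ((real (k - j)) / (1 - x) - (real (j - 1)) / x) * (x^(j-1) * (1-x)^(k-j)) / (fact (j-1) * fact (k-j))"
proof -
  have e1: "real (k-j) / (1-x) * (x^(j-1) * (1-x)^(k-j)) = real (k-j) * x^(j-1) * (1-x)^(k-j-1)"
    using assms by (cases "k-j") (auto simp: field_simps)
  have e2: "real (j-1) / x * (x^(j-1) * (1-x)^(k-j)) = real (j-1) * x^(j-1-1) * (1-x)^(k-j)"
    using assms by (cases "j-1") (auto simp: field_simps)
  have e3: "((real (k - j)) / (1 - x) - (real (j - 1)) / x) * (x^(j-1) * (1-x)^(k-j)) =
     real (k-j) * x^(j-1) * (1-x)^(k-j-1) - real (j-1) * x^(j-1-1) * (1-x)^(k-j)"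
    by (simp only: left_diff_distrib e1 e2)
  have "poly (Dp k j) x = (real (k-j) * x^(j-1) * (1-x)^(k-j-1) - real (j-1) * x^(j-1-1) * (1-x)^(k-j)) / (fact (j-1) * fact (k-j))"
    unfolding Dp_def Bp_def by (simp add: pderiv_smult poly_pderiv_aux field_simps)
  also have "\<dots> = ((real (k - j)) / (1 - x) - (real (j - 1)) / x) * (x^(j-1) * (1-x)^(k-j)) / (fact (j-1) * fact (k-j))"
    by (simp only: e3)
  finally show ?thesis .
qed

lemma coeff_Dp_low:
  assumes "2 \<le> h" "1 \<le> j" "j \<le> k" "k < h"
  shows "coeff (Dp k j) (h-2) = 0"
proof -
  have "Suc (h-2) = h-1" using assms by simp
  moreover have "(k-j) choose (h-1-(j-1)) = 0" using assms by simp
  ultimately show ?thesis by (simp add: coeff_Dp coeff_Bp)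
qed

lemma coeff_Dp_top:
  assumes "2 \<le> h" "h \<le> k" "1 \<le> j" "j \<le> k"
  shows "coeff (Dp k j) (h-2) = (-1)^h / (fact (h-2) * fact (k-h)) * bvec h j"
proof (cases "j \<le> h")
  case False
  then show ?thesis using assms by (simp add: coeff_Dp coeff_Bp bvec_def)
next
  case True
  obtain i where ij: "j = Suc i" using assms by (cases j) auto
  define e where "e = h - j"
  define g where "g = h - 2"
  have hg: "h = Suc (Suc g)" using assms unfolding g_def by arith
  have ge: "Suc g = i + e" using assms True ij unfolding g_def e_def by arith
  obtain K where kK: "k = h + K" using assms le_Suc_ex by blast
  have c1: "real ((e+K) choose e) = fact (e+K) / (fact e * fact K)"
    by (subst binomial_fact) auto
  have c2: "real ((Suc g) choose i) = fact (Suc g) / (fact i * fact e)"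
    using ge by (subst binomial_fact) auto
  have f1: "fact (Suc g) = real (Suc g) * (fact g :: real)"
    by simp
  have s2: "(-1::real)^g * (-1)^i = - ((-1)^e)"
  proof -
    have "(-1::real)^i * (-1)^i = 1" by (simp add: power_mult_distrib[symmetric])
    moreover have "(-1::real)^(Suc g) = (-1)^i * (-1)^e" using ge by (simp add: power_add)
    ultimately show ?thesis by (metis (no_types, lifting) mult.left_commute mult_1_right mult_minus1 power_Suc minus_minus)
  qed
  have "coeff (Dp k j) (h-2) = - real (Suc g) * ((-1)^e * real ((e+K) choose e)) / (fact i * fact (e+K))"
    using ij hg kK ge unfolding e_def by (simp add: coeff_Dp coeff_Bp algebra_simps)
  also have "\<dots> = - ((-1)^e) * real (Suc g) / (fact i * fact e * fact K)"
    unfolding c1 by (simp add: field_simps)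
  also have "\<dots> = ((-1)^g * (-1)^i) * (fact (Suc g) / (fact i * fact e)) / (fact g * fact K)"
    unfolding s2 f1 by (simp add: field_simps)
  also have "\<dots> = (-1)^h / (fact (h-2) * fact (k-h)) * bvec h j"
  proof -
    have r1: "bvec h j = (-1)^i * real (Suc g choose i)" using ij hg True by (simp add: bvec_def)
    have r2: "(-1::real)^h = (-1)^g" using hg by simp
    have r3: "h - 2 = g" "k - h = K" using hg kK by auto
    show ?thesis unfolding r1 r2 r3 c2 by simp
  qed
  finally show ?thesis .
qed
lemma pderiv_sum': "pderiv (sum f A) = (\<Sum>x\<in>A. pderiv (f x))"
  using higher_pderiv_sum[of 1 f A] by simp

lemma poly_zero_cofinite:
  fixes p :: "real poly"
  assumes "finite F" "\<And>x. x \<notin> F \<Longrightarrow> poly p x = 0"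
  shows "p = 0"
proof (rule ccontr)
  assume "p \<noteq> 0"
  then have "finite {x. poly p x = 0}" by (rule poly_roots_finite)
  moreover have "UNIV \<subseteq> F \<union> {x. poly p x = 0}" using assms(2) by auto
  ultimately have "finite (UNIV :: real set)" using assms(1) by (meson finite_UnI finite_subset)
  then show False using infinite_UNIV_char_0 by blast
qed

definition Gs :: "nat \<Rightarrow> (nat \<Rightarrow> nat) \<Rightarrow> real \<Rightarrow> real \<Rightarrow> real" where
  "Gs k f a b = fact k * (\<Sum>r\<in>{1..k}. poly (Dp k r) a * poly (Dp k (f r)) b)"

lemma sum_bvec:
  assumes "2 \<le> h" "h \<le> k"
  shows "(\<Sum>j\<in>{1..k}. bvec h j) = 0"
proof -
  have "(\<Sum>j\<in>{1..k}. bvec h j) = (\<Sum>j\<in>{1..h}. bvec h j)"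
    using assms by (intro sum.mono_neutral_right) (auto simp: bvec_def)
  also have "\<dots> = (\<Sum>j\<in>{Suc 0..Suc (h-1)}. bvec h j)" using assms by simp
  also have "\<dots> = (\<Sum>i\<in>{0..h-1}. bvec h (Suc i))" by (rule sum.shift_bounds_cl_Suc_ivl)
  also have "\<dots> = (\<Sum>i\<le>h-1. (-1)^i * of_nat ((h-1) choose i))"
    using assms by (intro sum.cong) (auto simp: bvec_def)
  also have "\<dots> = 0" using assms by (intro choose_alternating_sum) auto
  finally show ?thesis .
qed

lemma core:
  fixes m n h k :: nat and ord :: "nat \<Rightarrow> nat" and p :: "nat \<Rightarrow> nat \<Rightarrow> nat" and t :: "nat \<Rightarrow> real"
  assumes perms: "\<forall>i\<in>{1..m}. is_kperm (ord i) (p i)"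
    and vanish: "\<forall>a b. a \<noteq> 0 \<and> a \<noteq> 1 \<and> b \<noteq> 0 \<and> b \<noteq> 1 \<longrightarrow>
                   (\<Sum>i\<in>{1..m}. t i * Gs (ord i) (p i) a b) = 0"
    and n_range: "n \<le> m"
    and top: "\<forall>i\<in>{1..m}. (ord i = k \<longleftrightarrow> i \<le> n)"
    and h2: "2 \<le> h" and hk: "h \<le> k"
    and rest: "\<forall>i\<in>{n+1..m}. ord i \<le> h - 1"
  shows "\<forall>r\<in>{1..k}. (\<Sum>l\<in>{1..n}. t l * bvec h (p l r)) = 0"
proof -
  define v where "v r = (\<Sum>l\<in>{1..n}. t l * bvec h (p l r))" for r
  define \<kappa> :: real where "\<kappa> = (-1)^h / (fact (h-2) * fact (k-h))"
  have \<kappa>nz: "\<kappa> \<noteq> 0" unfolding \<kappa>_def by simp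
  have pin: "p i r \<in> {1..ord i}" if "i \<in> {1..m}" "r \<in> {1..ord i}" for i r
    using perms that unfolding is_kperm_def by (meson bij_betw_apply)
  have A: "(\<Sum>r\<in>{1..k}. v r * poly (Dp k r) a) = 0" if a: "a \<noteq> 0" "a \<noteq> 1" for a
  proof -
    define Pb where "Pb = (\<Sum>i\<in>{1..m}. smult (t i * fact (ord i))
        (\<Sum>r\<in>{1..ord i}. smult (poly (Dp (ord i) r) a) (Dp (ord i) (p i r))))"
    have "Pb = 0"
    proof (rule poly_zero_cofinite[of "{0,1}"])
      fix b :: real assume "b \<notin> {0,1}"
      then have "(\<Sum>i\<in>{1..m}. t i * Gs (ord i) (p i) a b) = 0" using vanish a by auto
      moreover have "poly Pb b = (\<Sum>i\<in>{1..m}. t i * Gs (ord i) (p i) a b)"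
        by (simp add: Pb_def poly_sum Gs_def mult.assoc)
      ultimately show "poly Pb b = 0" by simp
    qed simp
    then have "coeff Pb (h-2) = 0" by simp
    moreover have "coeff Pb (h-2) = (\<Sum>i\<in>{1..m}. t i * fact (ord i) *
        (\<Sum>r\<in>{1..ord i}. poly (Dp (ord i) r) a * coeff (Dp (ord i) (p i r)) (h-2)))"
      by (simp add: Pb_def coeff_sum)
    moreover have "\<dots> = (\<Sum>i\<in>{1..n}. t i * fact (ord i) *
        (\<Sum>r\<in>{1..ord i}. poly (Dp (ord i) r) a * coeff (Dp (ord i) (p i r)) (h-2)))"
    proof (rule sum.mono_neutral_right)
      show "\<forall>i\<in>{1..m} - {1..n}. t i * fact (ord i) *
        (\<Sum>r\<in>{1..ord i}. poly (Dp (ord i) r) a * coeff (Dp (ord i) (p i r)) (h-2)) = 0"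
      proof
        fix i assume i: "i \<in> {1..m} - {1..n}"
        then have "i \<in> {n+1..m}" by auto
        then have "ord i < h" using rest h2 by fastforce
        then have "coeff (Dp (ord i) (p i r)) (h-2) = 0" if "r \<in> {1..ord i}" for r
          using pin[of i r] i that h2 by (intro coeff_Dp_low) auto
        then show "t i * fact (ord i) *
          (\<Sum>r\<in>{1..ord i}. poly (Dp (ord i) r) a * coeff (Dp (ord i) (p i r)) (h-2)) = 0" by simp
      qed
    qed (use n_range in auto)
    moreover have "\<dots> = (\<Sum>i\<in>{1..n}. t i * fact k *
        (\<Sum>r\<in>{1..k}. poly (Dp k r) a * (\<kappa> * bvec h (p i r))))"
    proof (rule sum.cong)
      fix i assume i: "i \<in> {1..n}"
      then have ok: "ord i = k" using top n_range by auto
      have "coeff (Dp k (p i r)) (h-2) = \<kappa> * bvec h (p i r)" if "r \<in> {1..k}" for r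
        using pin[of i r] i that h2 hk ok n_range unfolding \<kappa>_def by (intro coeff_Dp_top) auto
      then show "t i * fact (ord i) *
        (\<Sum>r\<in>{1..ord i}. poly (Dp (ord i) r) a * coeff (Dp (ord i) (p i r)) (h-2)) =
        t i * fact k * (\<Sum>r\<in>{1..k}. poly (Dp k r) a * (\<kappa> * bvec h (p i r)))"
        using ok by simp
    qed simp
    moreover have "\<dots> = fact k * \<kappa> * (\<Sum>r\<in>{1..k}. v r * poly (Dp k r) a)"
      unfolding v_def sum_distrib_left sum_distrib_right
      by (subst sum.swap) (simp add: mult_ac)
    ultimately show ?thesis using \<kappa>nz by simp
  qed
  have B: "\<exists>K. \<forall>r\<in>{1..k}. v r = K * fact (k-1)"
  proof -
    define S where "S = (\<Sum>r\<in>{1..k}. smult (v r) (Bp k r))"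
    have "pderiv S = 0"
    proof (rule poly_zero_cofinite[of "{0,1}"])
      fix a :: real assume "a \<notin> {0,1}"
      then have "(\<Sum>r\<in>{1..k}. v r * poly (Dp k r) a) = 0" using A by auto
      moreover have "poly (pderiv S) a = - (\<Sum>r\<in>{1..k}. v r * poly (Dp k r) a)"
        by (simp add: S_def pderiv_sum' pderiv_smult poly_sum Dp_def sum_negf)
      ultimately show "poly (pderiv S) a = 0" by simp
    qed simp
    then obtain K where SK: "S = [:K:]" using pderiv_iszero by blast
    define U where "U = (\<Sum>r\<in>{1..k}. smult (v r / (fact (r-1) * fact (k-r))) (monom 1 (r-1)))
       - smult K ([:1,1:]^(k-1))"
    have "U = 0"
    proof (rule poly_zero_cofinite[of "{0,-1}"])
      fix y :: real assume y: "y \<notin> {0,-1}"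
      define \<alpha> where "\<alpha> = y/(1+y)"
      have y1: "1 + y \<noteq> 0" using y by auto
      have a1: "\<alpha> * (1+y) = y" "(1-\<alpha>) * (1+y) = 1" using y1 unfolding \<alpha>_def by (auto simp: field_simps)
      have e: "\<alpha>^(r-1) * (1-\<alpha>)^(k-r) * (1+y)^(k-1) = y^(r-1)" if "r\<in>{1..k}" for r
      proof -
        have "(1+y)^(k-1) = (1+y)^(r-1) * (1+y)^(k-r)" using that by (simp flip: power_add)
        then have "\<alpha>^(r-1) * (1-\<alpha>)^(k-r) * (1+y)^(k-1) = (\<alpha> * (1+y))^(r-1) * ((1-\<alpha>)*(1+y))^(k-r)"
          by (simp add: power_mult_distrib mult_ac)
        then show ?thesis using a1 by simp
      qed
      have "poly S \<alpha> = K" by (simp add: SK)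
      moreover have "poly S \<alpha> = (\<Sum>r\<in>{1..k}. v r / (fact (r-1) * fact (k-r)) * (\<alpha>^(r-1) * (1-\<alpha>)^(k-r)))"
        by (simp add: S_def poly_sum Bp_def poly_monom)
      ultimately have Keq: "(\<Sum>r\<in>{1..k}. v r / (fact (r-1) * fact (k-r)) * (\<alpha>^(r-1) * (1-\<alpha>)^(k-r))) = K"
        by simp
      have "K * (1+y)^(k-1) = (\<Sum>r\<in>{1..k}. v r / (fact (r-1) * fact (k-r)) * (\<alpha>^(r-1) * (1-\<alpha>)^(k-r)) * (1+y)^(k-1))"
        by (simp only: Keq[symmetric] sum_distrib_right)
      also have "\<dots> = (\<Sum>r\<in>{1..k}. v r / (fact (r-1) * fact (k-r)) * (\<alpha>^(r-1) * (1-\<alpha>)^(k-r) * (1+y)^(k-1)))"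
        by (simp only: mult.assoc)
      also have "\<dots> = (\<Sum>r\<in>{1..k}. v r / (fact (r-1) * fact (k-r)) * y^(r-1))"
        using e by (intro sum.cong) auto
      finally show "poly U y = 0" by (simp add: U_def poly_sum poly_monom algebra_simps)
    qed simp
    show ?thesis
    proof (intro exI ballI)
      fix r assume r: "r \<in> {1..k}"
      have "coeff U (r-1) = 0" using \<open>U = 0\<close> by simp
      moreover have "coeff U (r-1) = v r / (fact (r-1) * fact (k-r)) - K * real ((k-1) choose (r-1))"
      proof -
        have "coeff (\<Sum>r'\<in>{1..k}. smult (v r' / (fact (r'-1) * fact (k-r'))) (monom 1 (r'-1))) (r-1)
           = (\<Sum>r'\<in>{1..k}. if r' = r then v r' / (fact (r'-1) * fact (k-r')) else 0)"
          unfolding coeff_sum using r by (intro sum.cong) (auto simp: coeff_monom)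
        also have "\<dots> = v r / (fact (r-1) * fact (k-r))" using r by simp
        moreover have "coeff ([:1, 1:] ^ (k - 1) :: real poly) (r - 1) = real ((k-1) choose (r-1))"
        proof -
          have "r - 1 \<le> k - 1" using r by auto
          from coeff_linear_poly_power[OF this, of "1::real" 1] show ?thesis by simp
        qed
        ultimately show ?thesis by (simp add: U_def)
      qed
      moreover have "real ((k-1) choose (r-1)) = fact (k-1) / (fact (r-1) * fact (k-r))"
        using r by (subst binomial_fact) auto
      ultimately show "v r = K * fact (k-1)" by (simp add: field_simps)
    qed
  qed
  then obtain K where vK: "\<forall>r\<in>{1..k}. v r = K * fact (k-1)" by blast
  have "(\<Sum>r\<in>{1..k}. v r) = (\<Sum>l\<in>{1..n}. t l * (\<Sum>r\<in>{1..k}. bvec h (p l r)))"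
    unfolding v_def sum_distrib_left by (rule sum.swap)
  also have "\<dots> = (\<Sum>l\<in>{1..n}. t l * (\<Sum>j\<in>{1..k}. bvec h j))"
  proof (rule sum.cong)
    fix l assume l: "l \<in> {1..n}"
    then have lm: "l \<in> {1..m}" using n_range by auto
    then have "ord l = k" using top l by auto
    then have "bij_betw (p l) {1..k} {1..k}" using perms lm unfolding is_kperm_def by auto
    then show "t l * (\<Sum>r\<in>{1..k}. bvec h (p l r)) = t l * (\<Sum>j\<in>{1..k}. bvec h j)"
      by (simp add: sum.reindex_bij_betw)
  qed simp
  also have "\<dots> = 0" using sum_bvec[OF h2 hk] by simp
  finally have "(\<Sum>r\<in>{1..k}. v r) = 0" .
  moreover have "(\<Sum>r\<in>{1..k}. v r) = real k * (K * fact (k-1))" using vK by simp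
  ultimately have "K = 0" using h2 hk by simp
  then show ?thesis using vK unfolding v_def by simp
qed

lemma grad_Gs:
  assumes "is_kperm k f" "a \<noteq> 0" "a \<noteq> 1" "b \<noteq> 0" "b \<noteq> 1"
  shows "grad_poly k f a b = Gs k f a b"
  unfolding grad_poly_def Gs_def
proof (intro arg_cong[where f="\<lambda>x. fact k * x"] sum.cong refl)
  fix r assume r: "r \<in> {1..k}"
  then have fr: "f r \<in> {1..k}" using assms(1) unfolding is_kperm_def by (meson bij_betw_apply)
  show "((real (k - r)) / (1 - a) - (real (r - 1)) / a) *
      ((real (k - f r)) / (1 - b) - (real (f r - 1)) / b) *
      (a ^ (r - 1) * (1 - a) ^ (k - r) * b ^ (f r - 1) * (1 - b) ^ (k - f r)) /
      (fact (r - 1) * fact (k - r) * fact (f r - 1) * fact (k - f r)) =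
      poly (Dp k r) a * poly (Dp k (f r)) b"
    using r fr assms by (simp add: poly_Dp mult_ac)
qed

lemma Gs_swap:
  assumes "is_kperm k f"
  shows "Gs k f a b = Gs k (inv_into {1..k} f) b a"
proof -
  have bij: "bij_betw f {1..k} {1..k}" using assms unfolding is_kperm_def .
  have "(\<Sum>r\<in>{1..k}. poly (Dp k r) b * poly (Dp k (inv_into {1..k} f r)) a)
      = (\<Sum>s\<in>{1..k}. poly (Dp k (f s)) b * poly (Dp k (inv_into {1..k} f (f s))) a)"
    using sum.reindex_bij_betw[OF bij, of "\<lambda>r. poly (Dp k r) b * poly (Dp k (inv_into {1..k} f r)) a"] by simp
  also have "\<dots> = (\<Sum>s\<in>{1..k}. poly (Dp k s) a * poly (Dp k (f s)) b)"
    using bij by (intro sum.cong) (auto simp: bij_betw_def inv_into_f_f)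
  finally show ?thesis unfolding Gs_def by simp
qed

lemma sum_if_bij:
  fixes k :: nat and f :: "nat \<Rightarrow> nat"
  assumes "bij_betw f {1..k} {1..k}" "j \<in> {1..k}"
  shows "(\<Sum>i\<in>{1..k}. if f i = j then c i else (0::real)) = c (inv_into {1..k} f j)"
proof -
  have "(\<Sum>i\<in>{1..k}. if f i = j then c i else (0::real)) = (\<Sum>i\<in>{1..k}. if inv_into {1..k} f j = i then c i else 0)"
  proof (rule sum.cong)
    fix i assume i: "i \<in> {1..k}"
    have "f i = j \<longleftrightarrow> inv_into {1..k} f j = i"
      using assms i by (metis bij_betw_def f_inv_into_f inv_into_f_f)
    then show "(if f i = j then c i else 0) = (if inv_into {1..k} f j = i then c i else 0)" by simp
  qed simp
  also have "\<dots> = c (inv_into {1..k} f j)"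
  proof -
    have mem: "inv_into {1..k} f j \<in> {1..k}" using assms by (metis bij_betw_def inv_into_into)
    have gen: "\<And>x S. x \<in> S \<Longrightarrow> finite S \<Longrightarrow> (\<Sum>i\<in>S. if x = i then c i else (0::real)) = c x"
      by simp
    show ?thesis using mem by simp
  qed
  finally show ?thesis .
qed

theorem lemma9:
  fixes m n h k :: nat
    and ord :: "nat \<Rightarrow> nat"
    and p :: "nat \<Rightarrow> nat \<Rightarrow> nat"
    and t :: "nat \<Rightarrow> real"
  assumes m_pos: "1 \<le> m"
    and perms: "\<forall>i\<in>{1..m}. is_kperm (ord i) (p i)"
    and vanish: "\<forall>a b :: real. a \<noteq> 0 \<and> a \<noteq> 1 \<and> b \<noteq> 0 \<and> b \<noteq> 1 \<longrightarrow>
                   (\<Sum>i\<in>{1..m}. t i * grad_poly (ord i) (p i) a b) = 0"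
    and k_def: "k = Max (ord ` {1..m})"
    and n_range: "n \<le> m"
    and top: "\<forall>i\<in>{1..m}. (ord i = k \<longleftrightarrow> i \<le> n)"
    and h_range: "2 \<le> h" "h \<le> k"
    and rest: "\<forall>i\<in>{n+1..m}. ord i \<le> h - 1"
  shows "(\<forall>i\<in>{1..k}. (\<Sum>j\<in>{1..k}. cover {1..n} t p i j * bvec h j) = 0) \<and>
         (\<forall>j\<in>{1..k}. (\<Sum>i\<in>{1..k}. bvec h i * cover {1..n} t p i j) = 0)"
proof -
  define q where "q i = inv_into {1..ord i} (p i)" for i
  have permsq: "\<forall>i\<in>{1..m}. is_kperm (ord i) (q i)"
    using perms unfolding is_kperm_def q_def by (auto intro: bij_betw_inv_into)
  have vG: "\<forall>a b. a \<noteq> 0 \<and> a \<noteq> 1 \<and> b \<noteq> 0 \<and> b \<noteq> 1 \<longrightarrow>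
                   (\<Sum>i\<in>{1..m}. t i * Gs (ord i) (p i) a b) = 0"
  proof (intro allI impI)
    fix a b :: real assume ab: "a \<noteq> 0 \<and> a \<noteq> 1 \<and> b \<noteq> 0 \<and> b \<noteq> 1"
    have "(\<Sum>i\<in>{1..m}. t i * Gs (ord i) (p i) a b) = (\<Sum>i\<in>{1..m}. t i * grad_poly (ord i) (p i) a b)"
      using perms ab by (intro sum.cong) (auto simp: grad_Gs)
    then show "(\<Sum>i\<in>{1..m}. t i * Gs (ord i) (p i) a b) = 0" using vanish ab by simp
  qed
  have vGq: "\<forall>a b. a \<noteq> 0 \<and> a \<noteq> 1 \<and> b \<noteq> 0 \<and> b \<noteq> 1 \<longrightarrow>
                   (\<Sum>i\<in>{1..m}. t i * Gs (ord i) (q i) a b) = 0"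
  proof (intro allI impI)
    fix a b :: real assume ab: "a \<noteq> 0 \<and> a \<noteq> 1 \<and> b \<noteq> 0 \<and> b \<noteq> 1"
    have "(\<Sum>i\<in>{1..m}. t i * Gs (ord i) (q i) a b) = (\<Sum>i\<in>{1..m}. t i * Gs (ord i) (p i) b a)"
      using perms by (intro sum.cong) (auto simp: Gs_swap q_def)
    then show "(\<Sum>i\<in>{1..m}. t i * Gs (ord i) (q i) a b) = 0" using vG ab by simp
  qed
  note C1 = core[OF perms vG n_range top h_range rest]
  note C2 = core[OF permsq vGq n_range top h_range rest]
  have ordn: "ord l = k" if "l \<in> {1..n}" for l using top n_range that by auto
  have bijl: "bij_betw (p l) {1..k} {1..k}" if "l \<in> {1..n}" for l
    using perms ordn[OF that] that n_range unfolding is_kperm_def by auto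
  show ?thesis
  proof (intro conjI ballI)
    fix i assume i: "i \<in> {1..k}"
    have "(\<Sum>j\<in>{1..k}. cover {1..n} t p i j * bvec h j)
        = (\<Sum>l\<in>{1..n}. t l * (\<Sum>j\<in>{1..k}. if p l i = j then bvec h j else 0))"
    proof -
      have "(\<Sum>j\<in>{1..k}. cover {1..n} t p i j * bvec h j) = (\<Sum>j\<in>{1..k}. \<Sum>l\<in>{1..n}. t l * (if p l i = j then bvec h j else 0))"
        unfolding cover_def perm_mat_def by (auto simp: sum_distrib_right sum_distrib_left intro!: sum.cong)
      also have "\<dots> = (\<Sum>l\<in>{1..n}. \<Sum>j\<in>{1..k}. t l * (if p l i = j then bvec h j else 0))" by (rule sum.swap)
      finally show ?thesis by (simp only: sum_distrib_left)
    qed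
    also have "\<dots> = (\<Sum>l\<in>{1..n}. t l * bvec h (p l i))"
    proof (rule sum.cong)
      fix l assume l: "l \<in> {1..n}"
      have "p l i \<in> {1..k}" using bijl[OF l] i by (meson bij_betw_apply)
      then show "t l * (\<Sum>j\<in>{1..k}. if p l i = j then bvec h j else 0) = t l * bvec h (p l i)" by simp
    qed simp
    also have "\<dots> = 0" using C1 i by simp
    finally show "(\<Sum>j\<in>{1..k}. cover {1..n} t p i j * bvec h j) = 0" .
  next
    fix j assume j: "j \<in> {1..k}"
    have "(\<Sum>i\<in>{1..k}. bvec h i * cover {1..n} t p i j)
        = (\<Sum>l\<in>{1..n}. t l * (\<Sum>i\<in>{1..k}. if p l i = j then bvec h i else 0))"
    proof -
      have "(\<Sum>i\<in>{1..k}. bvec h i * cover {1..n} t p i j) = (\<Sum>i\<in>{1..k}. \<Sum>l\<in>{1..n}. t l * (if p l i = j then bvec h i else 0))"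
        unfolding cover_def perm_mat_def by (auto simp: sum_distrib_right sum_distrib_left intro!: sum.cong)
      also have "\<dots> = (\<Sum>l\<in>{1..n}. \<Sum>i\<in>{1..k}. t l * (if p l i = j then bvec h i else 0))" by (rule sum.swap)
      finally show ?thesis by (simp only: sum_distrib_left)
    qed
    also have "\<dots> = (\<Sum>l\<in>{1..n}. t l * bvec h (q l j))"
    proof (rule sum.cong)
      fix l assume l: "l \<in> {1..n}"
      show "t l * (\<Sum>i\<in>{1..k}. if p l i = j then bvec h i else 0) = t l * bvec h (q l j)"
        using sum_if_bij[OF bijl[OF l] j, of "bvec h"] ordn[OF l] unfolding q_def by simp
    qed simp
    also have "\<dots> = 0" using C2 j by simp
    finally show "(\<Sum>i\<in>{1..k}. bvec h i * cover {1..n} t p i j) = 0" .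
  qed
qed

end
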